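(* Let $A\in\mathbb{R}^{n\times n}$ be irreducible and nonnegative. Then $r\big((1-t)A+tA^{\top}\big)$ is constant in $t\in[0,1]$ if and only if the Perron vector of $A+A^{\top}$ lies in the null space of $A-A^{\top}$.
   Context: $r(M)$ denotes the spectral radius of $M$. The Perron vector of an irreducible nonnegative matrix is its positive eigenvector (unique up to scaling) for the eigenvalue equal to its spectral radius. *)

theory Defs
  imports "Jordan_Normal_Form.Spectral_Radius"
begin

definition real_spectral_radius :: "real mat \<Rightarrow> real" where
  "real_spectral_radius M = spectral_radius (map_mat complex_of_real M)"

definition nonneg_mat :: "real mat \<Rightarrow> bool" where
  "nonneg_mat M \<longleftrightarrow> (\<forall>i < dim_row M. \<forall>j < dim_col M. M $$ (i,j) \<ge> 0)"

definition irreducible_mat :: "real mat \<Rightarrow> bool" where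
  "irreducible_mat M \<longleftrightarrow> (\<exists>n. M \<in> carrier_mat n n \<and> n > 0 \<and>
     (\<forall>i < n. \<forall>j < n. i \<noteq> j \<longrightarrow>
        (i, j) \<in> {(k, l). k < n \<and> l < n \<and> M $$ (k, l) \<noteq> 0}\<^sup>+))"

definition perron_vector :: "real mat \<Rightarrow> real vec \<Rightarrow> bool" where
  "perron_vector M v \<longleftrightarrow> v \<in> carrier_vec (dim_col M) \<and> (\<forall>i < dim_vec v. v $ i > 0) \<and>
     M *\<^sub>v v = real_spectral_radius M \<cdot>\<^sub>v v"

end

theory Submission
  imports Defs "HOL-Analysis.Analysis"
begin
no_notation Finite_Cartesian_Product.vec_nth (infixl "$" 90)

lemma mv_nth:
  assumes "A \<in> carrier_mat n n" "v \<in> carrier_vec n" "i < n"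
  shows "(A *\<^sub>v v) $ i = (\<Sum>j<n. A $$ (i,j) * v $ j)"
  using assms by (auto simp: scalar_prod_def lessThan_atLeast0 intro!: sum.cong)

lemma L1:
  fixes A :: "real mat" and z :: "complex Matrix.vec"
  assumes A: "A \<in> carrier_mat n n" and nn: "nonneg_mat A"
    and z: "z \<in> carrier_vec n"
    and ev: "map_mat complex_of_real A *\<^sub>v z = \<mu> \<cdot>\<^sub>v z" and i: "i < n"
  shows "cmod \<mu> * cmod (z $ i) \<le> (\<Sum>j<n. A $$ (i,j) * cmod (z $ j))"
proof -
  have B: "map_mat complex_of_real A \<in> carrier_mat n n" using A by simp
  have "\<mu> * z $ i = (\<Sum>j<n. complex_of_real (A $$ (i,j)) * z $ j)"
  proof -
    have "\<mu> * z $ i = (\<mu> \<cdot>\<^sub>v z) $ i" using z i by simp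
    also have "\<dots> = (map_mat complex_of_real A *\<^sub>v z) $ i" using ev by simp
    also have "\<dots> = (\<Sum>j<n. complex_of_real (A $$ (i,j)) * z $ j)"
      using mv_nth[OF B z i] A i by simp
    finally show ?thesis .
  qed
  hence "cmod \<mu> * cmod (z $ i) = cmod (\<Sum>j<n. complex_of_real (A $$ (i,j)) * z $ j)"
    by (metis norm_mult)
  also have "\<dots> \<le> (\<Sum>j<n. cmod (complex_of_real (A $$ (i,j)) * z $ j))"
    by (rule norm_sum)
  also have "\<dots> = (\<Sum>j<n. A $$ (i,j) * cmod (z $ j))"
  proof (rule sum.cong)
    fix j assume "j \<in> {..<n}"
    then have "A $$ (i,j) \<ge> 0" using nn A i unfolding nonneg_mat_def by auto
    then show "cmod (complex_of_real (A $$ (i,j)) * z $ j) = A $$ (i,j) * cmod (z $ j)"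
      by (simp add: norm_mult)
  qed simp
  finally show ?thesis .
qed

lemma L2:
  fixes A :: "real mat" and v :: "real Matrix.vec"
  assumes A: "A \<in> carrier_mat n n" and nn: "nonneg_mat A"
    and v: "v \<in> carrier_vec n" and pos: "\<And>i. i < n \<Longrightarrow> v $ i > 0"
    and ev: "A *\<^sub>v v = lam \<cdot>\<^sub>v v" and n: "n > 0"
  shows "real_spectral_radius A = lam"
proof -
  define B where "B = map_mat complex_of_real A"
  have B: "B \<in> carrier_mat n n" using A by (simp add: B_def)
  have evi: "(\<Sum>j<n. A $$ (i,j) * v $ j) = lam * v $ i" if "i < n" for i
  proof -
    have "(A *\<^sub>v v) $ i = (lam \<cdot>\<^sub>v v) $ i" using ev by simp
    then show ?thesis using mv_nth[OF A v that] v that by simp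
  qed
  have lam0: "lam \<ge> 0"
  proof -
    have "0 \<le> (\<Sum>j<n. A $$ (0,j) * v $ j)"
      using nn A n pos by (auto simp: nonneg_mat_def intro!: sum_nonneg mult_nonneg_nonneg less_imp_le[OF pos])
    then have "0 \<le> lam * v $ 0" using evi[OF n] by simp
    then show ?thesis using pos[OF n] by (simp add: zero_le_mult_iff)
  qed
  define w where "w = map_vec complex_of_real v"
  have w: "w \<in> carrier_vec n" using v by (simp add: w_def)
  have "eigenvector B w (complex_of_real lam)"
    unfolding eigenvector_def
  proof (intro conjI)
    show "w \<in> carrier_vec (dim_row B)" using w B by simp
    show "w \<noteq> 0\<^sub>v (dim_row B)"
    proof
      assume "w = 0\<^sub>v (dim_row B)"
      then have "w $ 0 = 0" using B n by simp
      then show False using pos[OF n] v n by (simp add: w_def)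
    qed
    show "B *\<^sub>v w = complex_of_real lam \<cdot>\<^sub>v w"
    proof (rule eq_vecI)
      show "dim_vec (B *\<^sub>v w) = dim_vec (complex_of_real lam \<cdot>\<^sub>v w)" using B w by simp
      fix i assume "i < dim_vec (complex_of_real lam \<cdot>\<^sub>v w)"
      then have i: "i < n" using w by simp
      have "(B *\<^sub>v w) $ i = (\<Sum>j<n. B $$ (i,j) * w $ j)" by (rule mv_nth[OF B w i])
      also have "\<dots> = complex_of_real (\<Sum>j<n. A $$ (i,j) * v $ j)"
        using A v i by (simp add: B_def w_def)
      also have "\<dots> = (complex_of_real lam \<cdot>\<^sub>v w) $ i" using evi[OF i] i v by (simp add: w_def)
      finally show "(B *\<^sub>v w) $ i = (complex_of_real lam \<cdot>\<^sub>v w) $ i" .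
    qed
  qed
  then have lin: "complex_of_real lam \<in> spectrum B"
    unfolding spectrum_def eigenvalue_def by auto
  have ub: "cmod \<mu> \<le> lam" if mu: "\<mu> \<in> spectrum B" for \<mu>
  proof -
    from mu obtain z where ez: "eigenvector B z \<mu>"
      unfolding spectrum_def eigenvalue_def by auto
    then have z: "z \<in> carrier_vec n" and z0: "z \<noteq> 0\<^sub>v n" and zev: "B *\<^sub>v z = \<mu> \<cdot>\<^sub>v z"
      using B unfolding eigenvector_def by auto
    define R where "R = (\<lambda>i. cmod (z $ i) / v $ i)"
    define m where "m = Max (R ` {..<n})"
    have fin: "finite (R ` {..<n})" by simp
    have ne: "R ` {..<n} \<noteq> {}" using n by auto
    obtain i where i: "i < n" and Ri: "R i = m"
      using Max_in[OF fin ne] unfolding m_def by auto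
    have Rle: "R j \<le> m" if "j < n" for j unfolding m_def using that fin by auto
    obtain k where k: "k < n" and zk: "z $ k \<noteq> 0"
    proof -
      have "\<exists>k<n. z $ k \<noteq> 0"
      proof (rule ccontr)
        assume "\<not> ?thesis"
        then have "z = 0\<^sub>v n" using z by (intro eq_vecI) auto
        then show False using z0 by simp
      qed
      then show ?thesis using that by blast
    qed
    have "R k > 0" using zk pos[OF k] by (simp add: R_def)
    then have mpos: "m > 0" using Rle[OF k] by simp
    have zi: "cmod (z $ i) = m * v $ i" using Ri pos[OF i] by (simp add: R_def field_simps)
    have "cmod \<mu> * cmod (z $ i) \<le> (\<Sum>j<n. A $$ (i,j) * cmod (z $ j))"
      by (rule L1[OF A nn z _ i]) (use zev in \<open>simp add: B_def\<close>)
    also have "\<dots> \<le> (\<Sum>j<n. A $$ (i,j) * (m * v $ j))"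
    proof (rule sum_mono)
      fix j assume j: "j \<in> {..<n}"
      have "cmod (z $ j) \<le> m * v $ j" using Rle[of j] j pos[of j] by (simp add: R_def field_simps)
      moreover have "A $$ (i,j) \<ge> 0" using nn A i j unfolding nonneg_mat_def by auto
      ultimately show "A $$ (i,j) * cmod (z $ j) \<le> A $$ (i,j) * (m * v $ j)"
        by (simp add: mult_left_mono)
    qed
    also have "\<dots> = m * (\<Sum>j<n. A $$ (i,j) * v $ j)"
      by (simp add: sum_distrib_left mult.left_commute)
    also have "\<dots> = lam * cmod (z $ i)" using evi[OF i] zi by simp
    finally have "cmod \<mu> * cmod (z $ i) \<le> lam * cmod (z $ i)" .
    moreover have "cmod (z $ i) > 0" using zi mpos pos[OF i] by simp
    ultimately show ?thesis by simp
  qed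
  have fin: "finite (spectrum B)" using card_finite_spectrum[OF B] by simp
  have "Max (cmod ` spectrum B) = lam"
  proof (rule Max_eqI)
    show "finite (cmod ` spectrum B)" using fin by simp
    show "\<And>y. y \<in> cmod ` spectrum B \<Longrightarrow> y \<le> lam" using ub by auto
    show "lam \<in> cmod ` spectrum B" using lin lam0 by (intro image_eqI[of _ _ "complex_of_real lam"]) auto
  qed
  then show ?thesis unfolding real_spectral_radius_def spectral_radius_def B_def .
qed


lemma trancl_prop:
  assumes "(i,j) \<in> R\<^sup>+" "P i" "\<And>a b. (a,b) \<in> R \<Longrightarrow> P a \<Longrightarrow> P b"
  shows "P j"
  using assms(1,2) by (induction rule: trancl_induct) (auto intro: assms(3))

lemma irr_prop:
  fixes A :: "real mat"
  assumes A: "A \<in> carrier_mat n n" and irr: "irreducible_mat A"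
    and step: "\<And>a b. a < n \<Longrightarrow> b < n \<Longrightarrow> A $$ (a,b) \<noteq> 0 \<Longrightarrow> P a \<Longrightarrow> P b"
    and i: "i < n" and j: "j < n" and Pi: "P i"
  shows "P j"
proof (cases "i = j")
  case True then show ?thesis using Pi by simp
next
  case False
  from irr obtain m where m: "A \<in> carrier_mat m m" "m > 0"
    and con: "\<forall>i < m. \<forall>j < m. i \<noteq> j \<longrightarrow>
        (i, j) \<in> {(k, l). k < m \<and> l < m \<and> A $$ (k, l) \<noteq> 0}\<^sup>+"
    unfolding irreducible_mat_def by blast
  have "m = n" using m A by auto
  with con i j False have "(i, j) \<in> {(k, l). k < n \<and> l < n \<and> A $$ (k, l) \<noteq> 0}\<^sup>+" by auto
  then show ?thesis by (rule trancl_prop) (use Pi step in auto)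
qed

lemma L3:
  fixes A :: "real mat" and v :: "real Matrix.vec"
  assumes A: "A \<in> carrier_mat n n" and nn: "nonneg_mat A" and irr: "irreducible_mat A"
    and v: "v \<in> carrier_vec n" and pos: "\<And>i. i < n \<Longrightarrow> v $ i > 0"
    and evS: "(A + A\<^sup>T) *\<^sub>v v = (2*c) \<cdot>\<^sub>v v"
    and mu: "\<mu> \<in> spectrum (map_mat complex_of_real A)" and cm: "cmod \<mu> = c"
  shows "A *\<^sub>v v = c \<cdot>\<^sub>v v"
proof -
  define B where "B = map_mat complex_of_real A"
  have B: "B \<in> carrier_mat n n" using A by (simp add: B_def)
  from mu obtain z where ez: "eigenvector B z \<mu>"
    unfolding spectrum_def eigenvalue_def B_def by auto
  then have z: "z \<in> carrier_vec n" and z0: "z \<noteq> 0\<^sub>v n" and zev: "B *\<^sub>v z = \<mu> \<cdot>\<^sub>v z"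
    using B unfolding eigenvector_def by auto
  define a where "a = (\<lambda>i j. A $$ (i,j))"
  define y where "y = (\<lambda>i. cmod (z $ i))"
  define x where "x = (\<lambda>i. v $ i)"
  define w where "w = (\<lambda>i. y i / x i)"
  have xpos: "x i > 0" if "i < n" for i using pos[OF that] by (simp add: x_def)
  have a0: "a i j \<ge> 0" if "i < n" "j < n" for i j
    using nn A that unfolding nonneg_mat_def a_def by auto
  have y0: "y i \<ge> 0" for i by (simp add: y_def)
  have H1: "c * y i \<le> (\<Sum>j<n. a i j * y j)" if i: "i < n" for i
    using L1[OF A nn z _ i, of \<mu>] zev cm by (simp add: B_def a_def y_def)
  have H2: "(\<Sum>j<n. (a i j + a j i) * x j) = 2 * c * x i" if i: "i < n" for i
  proof -
    have AT: "A + A\<^sup>T \<in> carrier_mat n n" using A by simp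
    have "((A + A\<^sup>T) *\<^sub>v v) $ i = ((2*c) \<cdot>\<^sub>v v) $ i" using evS by simp
    then show ?thesis using mv_nth[OF AT v i] A v i
      by (simp add: a_def x_def)
  qed
  define T where "T = (\<Sum>i<n. \<Sum>j<n. a i j * x i * x j * (w i - w j)^2)"
  define Q where "Q = (\<Sum>i<n. \<Sum>j<n. a i j * y i * y j)"
  have trm: "a i j * x i * x j * (w i - w j)^2
      = a i j * x j * (y i^2 / x i) + a j i * x j * (y j ^2 / x j) * 0 + a i j * x i * (y j^2 / x j) - 2 * (a i j * y i * y j)"
    if "i < n" "j < n" for i j
    using xpos[OF that(1)] xpos[OF that(2)]
    by (simp add: w_def field_simps power2_eq_square)
  have s1: "(\<Sum>i<n. \<Sum>j<n. a i j * x j * (y i^2 / x i)) = (\<Sum>i<n. (y i^2 / x i) * (\<Sum>j<n. a i j * x j))"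
    by (simp add: sum_distrib_left mult_ac)
  have s2: "(\<Sum>i<n. \<Sum>j<n. a i j * x i * (y j^2 / x j)) = (\<Sum>i<n. (y i^2 / x i) * (\<Sum>j<n. a j i * x j))"
    by (subst sum.swap) (simp add: sum_distrib_left mult_ac)
  have s3: "(\<Sum>i<n. (y i^2 / x i) * (\<Sum>j<n. a i j * x j)) + (\<Sum>i<n. (y i^2 / x i) * (\<Sum>j<n. a j i * x j))
      = (\<Sum>i<n. (y i^2 / x i) * (\<Sum>j<n. (a i j + a j i) * x j))"
    unfolding sum.distrib[symmetric]
    by (rule sum.cong[OF refl]) (simp add: distrib_right sum.distrib add_divide_distrib distrib_left)
  also have "\<dots> = (\<Sum>i<n. (y i^2 / x i) * (2 * c * x i))"
    by (rule sum.cong) (auto simp: H2)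
  also have "\<dots> = (\<Sum>i<n. 2 * c * y i^2)"
  proof (rule sum.cong[OF refl])
    fix i assume "i \<in> {..<n}"
    then have "x i \<noteq> 0" using xpos by force
    then show "y i^2 / x i * (2 * c * x i) = 2 * c * y i^2" by (simp add: field_simps)
  qed
  finally have s3': "(\<Sum>i<n. (y i^2 / x i) * (\<Sum>j<n. a i j * x j)) + (\<Sum>i<n. (y i^2 / x i) * (\<Sum>j<n. a j i * x j))
      = (\<Sum>i<n. 2 * c * y i^2)" .
  have TQ: "T = (\<Sum>i<n. 2 * c * y i^2) - 2 * Q"
  proof -
    have "T = (\<Sum>i<n. \<Sum>j<n. a i j * x j * (y i^2 / x i) + a i j * x i * (y j^2 / x j) - 2 * (a i j * y i * y j))"
      unfolding T_def by (intro sum.cong refl) (simp add: trm)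
    also have "\<dots> = (\<Sum>i<n. \<Sum>j<n. a i j * x j * (y i^2 / x i)) + (\<Sum>i<n. \<Sum>j<n. a i j * x i * (y j^2 / x j))
        - 2 * Q"
      by (simp add: Q_def sum.distrib sum_subtractf sum_distrib_left)
    finally show ?thesis using s1 s2 s3' by simp
  qed
  have Qge: "Q \<ge> (\<Sum>i<n. c * y i^2)"
  proof -
    have "(\<Sum>i<n. c * y i^2) \<le> (\<Sum>i<n. y i * (\<Sum>j<n. a i j * y j))"
    proof (rule sum_mono)
      fix i assume "i \<in> {..<n}"
      then have "y i * (c * y i) \<le> y i * (\<Sum>j<n. a i j * y j)"
        using H1 y0 by (auto intro: mult_left_mono)
      then show "c * y i^2 \<le> y i * (\<Sum>j<n. a i j * y j)" by (simp add: power2_eq_square mult_ac)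
    qed
    also have "\<dots> = Q" by (simp add: Q_def sum_distrib_left mult_ac)
    finally show ?thesis .
  qed
  have Tnn: "\<And>i j. i \<in> {..<n} \<Longrightarrow> j \<in> {..<n} \<Longrightarrow> a i j * x i * x j * (w i - w j)^2 \<ge> 0"
    using a0 xpos by (auto intro!: mult_nonneg_nonneg less_imp_le[OF xpos])
  have "T \<ge> 0" unfolding T_def using Tnn by (auto intro!: sum_nonneg)
  moreover have "(\<Sum>i<n. 2 * c * y i^2) = 2 * (\<Sum>i<n. c * y i^2)" by (simp add: sum_distrib_left mult_ac)
  ultimately have T0: "T = 0" and Qeq: "Q = (\<Sum>i<n. c * y i^2)" using TQ Qge by auto
  have edge: "w i = w j" if ij: "i < n" "j < n" and aij: "A $$ (i,j) \<noteq> 0" for i j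
  proof -
    have inner: "\<forall>i\<in>{..<n}. (\<Sum>j<n. a i j * x i * x j * (w i - w j)^2) = 0"
      using T0 unfolding T_def by (subst (asm) sum_nonneg_eq_0_iff) (auto intro!: sum_nonneg Tnn)
    then have "(\<Sum>j<n. a i j * x i * x j * (w i - w j)^2) = 0" using ij by auto
    then have "a i j * x i * x j * (w i - w j)^2 = 0"
      using ij by (subst (asm) sum_nonneg_eq_0_iff) (auto intro!: Tnn)
    moreover have "a i j \<noteq> 0" using aij by (simp add: a_def)
    ultimately show ?thesis using xpos[OF ij(1)] xpos[OF ij(2)] by simp
  qed
  have n0: "n > 0"
  proof (rule ccontr)
    assume "\<not> n > 0" then have "n = 0" by simp
    then have "z = 0\<^sub>v n" using z by (intro eq_vecI) auto
    then show False using z0 by simp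
  qed
  have wconst: "w i = w 0" if i: "i < n" for i
    using irr_prop[OF A irr, of "\<lambda>k. w k = w 0" 0 i] edge i n0 by fastforce
  define k where "k = w 0"
  have yk: "y i = k * x i" if "i < n" for i
    using wconst[OF that] xpos[OF that] by (simp add: k_def w_def field_simps)
  obtain i0 where i0: "i0 < n" and zi0: "z $ i0 \<noteq> 0"
  proof -
    have "\<exists>k<n. z $ k \<noteq> 0"
    proof (rule ccontr)
      assume "\<not> ?thesis"
      then have "z = 0\<^sub>v n" using z by (intro eq_vecI) auto
      then show False using z0 by simp
    qed
    then show ?thesis using that by blast
  qed
  have "y i0 > 0" using zi0 by (simp add: y_def)
  then have kpos: "k > 0" using yk[OF i0] xpos[OF i0] by (simp add: zero_less_mult_iff)
  have ypos: "y i > 0" if "i < n" for i using yk[OF that] kpos xpos[OF that] by simp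
  define D where "D = (\<lambda>i. y i * ((\<Sum>j<n. a i j * y j) - c * y i))"
  have Dnn: "\<And>i. i \<in> {..<n} \<Longrightarrow> D i \<ge> 0" using H1 y0 by (auto simp: D_def)
  have "(\<Sum>i<n. D i) = Q - (\<Sum>i<n. c * y i^2)"
    by (simp add: D_def Q_def sum_subtractf sum_distrib_left right_diff_distrib power2_eq_square mult_ac)
  then have "(\<Sum>i<n. D i) = 0" using Qeq by simp
  then have D0: "\<forall>i\<in>{..<n}. D i = 0" using Dnn by (subst (asm) sum_nonneg_eq_0_iff) auto
  have row: "(\<Sum>j<n. a i j * x j) = c * x i" if i: "i < n" for i
  proof -
    have "D i = 0" using D0 i by simp
    then have h1: "(\<Sum>j<n. a i j * y j) = c * y i" using ypos[OF i] by (simp add: D_def)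
    have h2: "(\<Sum>j<n. a i j * y j) = k * (\<Sum>j<n. a i j * x j)"
      by (simp add: sum_distrib_left yk mult_ac)
    have "k * (\<Sum>j<n. a i j * x j) = c * y i" using h1 h2 by simp
    also have "\<dots> = k * (c * x i)" using yk[OF i] by simp
    finally have "k * (\<Sum>j<n. a i j * x j) = k * (c * x i)" .
    then show ?thesis using kpos by simp
  qed
  show ?thesis
  proof (rule eq_vecI)
    show "dim_vec (A *\<^sub>v v) = dim_vec (c \<cdot>\<^sub>v v)" using A v by simp
    fix i assume "i < dim_vec (c \<cdot>\<^sub>v v)"
    then have i: "i < n" using v by simp
    show "(A *\<^sub>v v) $ i = (c \<cdot>\<^sub>v v) $ i"
      using mv_nth[OF A v i] row[OF i] v i by (simp add: a_def x_def)
  qed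
qed


lemma compact_sphere:
  fixes n :: nat
  shows "compactin (powertop_real UNIV)
     ({x. x \<in> topspace (powertop_real UNIV) \<and> (\<Sum>i<n. (x i)^2) \<in> {1}} \<inter> (UNIV \<rightarrow>\<^sub>E {-1..1::real}))"
proof (rule closed_Int_compactin)
  show "compactin (powertop_real UNIV) (UNIV \<rightarrow>\<^sub>E {-1..1::real})"
    by (simp add: compactin_PiE)
  have "continuous_map (powertop_real UNIV) euclideanreal (\<lambda>x. \<Sum>i<n. (x i)^2)"
    by (intro continuous_intros) auto
  from closedin_continuous_map_preimage[OF this closed_singleton[unfolded closed_closedin]]
  show "closedin (powertop_real UNIV) {x. x \<in> topspace (powertop_real UNIV) \<and> (\<Sum>i<n. (x i)^2) \<in> {1}}"
    by simp
qed

lemma quad_max: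
  fixes m :: "nat \<Rightarrow> nat \<Rightarrow> real"
  assumes n: "n > 0"
  shows "\<exists>x0. (\<Sum>i<n. (x0 i)^2) = 1 \<and> (\<forall>x. (\<Sum>i<n. (x i)^2) = 1 \<longrightarrow>
      (\<Sum>i<n. \<Sum>j<n. m i j * x i * x j) \<le> (\<Sum>i<n. \<Sum>j<n. m i j * x0 i * x0 j))"
proof -
  define K where "K = {x. x \<in> topspace (powertop_real UNIV) \<and> (\<Sum>i<n. (x i)^2) \<in> {1}} \<inter> (UNIV \<rightarrow>\<^sub>E {-1..1::real})"
  define f where "f = (\<lambda>x::nat\<Rightarrow>real. \<Sum>i<n. \<Sum>j<n. m i j * x i * x j)"
  have cK: "compactin (powertop_real UNIV) K" unfolding K_def by (rule compact_sphere)
  have cf: "continuous_map (powertop_real UNIV) euclideanreal f"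
    unfolding f_def by (intro continuous_intros) auto
  have "compactin euclideanreal (f ` K)" by (rule image_compactin[OF cK cf])
  then have cfK: "compact (f ` K)" by simp
  define e0 where "e0 = (\<lambda>i::nat. if i = 0 then 1 else (0::real))"
  have "\<And>i. (e0 i)^2 = (if i = 0 then 1 else 0)" by (simp add: e0_def)
  then have "(\<Sum>i<n. (e0 i)^2) = 1" using n by (simp add: sum.delta)
  then have "e0 \<in> K" by (auto simp: K_def e0_def PiE_def extensional_def)
  then have ne: "f ` K \<noteq> {}" by auto
  from compact_attains_sup[OF cfK ne] obtain x0 where x0: "x0 \<in> K" and mx: "\<And>x. x \<in> K \<Longrightarrow> f x \<le> f x0"
    by auto
  have g0: "(\<Sum>i<n. (x0 i)^2) = 1" using x0 by (auto simp: K_def)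
  show ?thesis
  proof (intro exI[of _ x0] conjI allI impI g0)
    fix x :: "nat \<Rightarrow> real" assume gx: "(\<Sum>i<n. (x i)^2) = 1"
    define x' where "x' = (\<lambda>i. if i < n then x i else 0)"
    have le1: "\<bar>x i\<bar> \<le> 1" if "i < n" for i
    proof -
      have "(x i)^2 \<le> (\<Sum>i<n. (x i)^2)"
        using that by (intro member_le_sum) auto
      then have "(x i)^2 \<le> 1" using gx by simp
      then show ?thesis by (simp add: abs_square_le_1)
    qed
    have "x' \<in> K" using gx le1 by (auto simp: K_def x'_def PiE_def extensional_def abs_le_iff)
    then have "f x' \<le> f x0" by (rule mx)
    moreover have "f x' = f x" unfolding f_def x'_def by (intro sum.cong refl) auto
    ultimately show "(\<Sum>i<n. \<Sum>j<n. m i j * x i * x j) \<le> (\<Sum>i<n. \<Sum>j<n. m i j * x0 i * x0 j)"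
      by (simp add: f_def)
  qed
qed

lemma sum_delta_r:
  fixes c :: "nat \<Rightarrow> real"
  assumes "k < n"
  shows "(\<Sum>j<n. c j * (if j = k then t else 0)) = c k * t"
proof -
  have "(\<Sum>j<n. c j * (if j = k then t else 0)) = (\<Sum>j<n. if j = k then c j * t else 0)"
    by (intro sum.cong) auto
  also have "\<dots> = c k * t" using assms by (simp add: sum.delta)
  finally show ?thesis .
qed

lemma perron_exists:
  fixes A :: "real mat"
  assumes A: "A \<in> carrier_mat n n" and nn: "nonneg_mat A" and irr: "irreducible_mat A"
  shows "\<exists>v. perron_vector (A + A\<^sup>T) v"
proof -
  define M where "M = A + A\<^sup>T"
  have M: "M \<in> carrier_mat n n" using A by (simp add: M_def)
  define m where "m = (\<lambda>i j. M $$ (i,j))"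
  have Aij0: "A $$ (i,j) \<ge> 0" if "i < n" "j < n" for i j
    using nn A that unfolding nonneg_mat_def by auto
  have mij: "m i j = A $$ (i,j) + A $$ (j,i)" if "i < n" "j < n" for i j
    using A that by (simp add: m_def M_def)
  have msym: "m i j = m j i" if "i < n" "j < n" for i j using mij that by simp
  have mnn: "m i j \<ge> 0" if "i < n" "j < n" for i j using mij Aij0 that by (simp add: add_nonneg_nonneg)
  have mA: "m i j \<ge> A $$ (i,j)" if "i < n" "j < n" for i j using mij Aij0 that by simp
  have Mnn: "nonneg_mat M" using mnn M by (auto simp: nonneg_mat_def m_def)
  have n: "n > 0" using irr A unfolding irreducible_mat_def by auto
  define f where "f = (\<lambda>x::nat\<Rightarrow>real. \<Sum>i<n. \<Sum>j<n. m i j * x i * x j)"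
  define g where "g = (\<lambda>x::nat\<Rightarrow>real. \<Sum>i<n. (x i)^2)"
  obtain x0 where gx0: "g x0 = 1" and mx0: "\<And>x. g x = 1 \<Longrightarrow> f x \<le> f x0"
    using quad_max[OF n, of m] unfolding f_def g_def by blast
  define y where "y = (\<lambda>i. \<bar>x0 i\<bar>)"
  have y0: "y i \<ge> 0" for i by (simp add: y_def)
  have gy: "g y = 1" using gx0 by (simp add: g_def y_def)
  have "f x0 \<le> f y" unfolding f_def
  proof (intro sum_mono)
    fix i j assume i: "i \<in> {..<n}" and j: "j \<in> {..<n}"
    have "x0 i * x0 j \<le> y i * y j" by (simp add: y_def abs_mult[symmetric])
    then have "m i j * (x0 i * x0 j) \<le> m i j * (y i * y j)"
      using mnn i j by (intro mult_left_mono) auto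
    then show "m i j * x0 i * x0 j \<le> m i j * y i * y j" by (simp add: mult.assoc)
  qed
  define lam where "lam = f y"
  have maxy: "f x \<le> lam" if "g x = 1" for x using mx0[OF that] \<open>f x0 \<le> f y\<close> by (simp add: lam_def)
  have ray: "f x \<le> lam * g x" for x
  proof (cases "g x = 0")
    case True
    then have "\<forall>i\<in>{..<n}. (x i)^2 = 0" unfolding g_def by (subst (asm) sum_nonneg_eq_0_iff) auto
    then have "f x = 0" unfolding f_def by (intro sum.neutral) auto
    then show ?thesis using True by simp
  next
    case False
    have gpos: "g x > 0" using False unfolding g_def by (metis less_eq_real_def sum_nonneg zero_le_power2)
    define s where "s = sqrt (g x)"
    have spos: "s > 0" using gpos by (simp add: s_def)
    have s2: "s^2 = g x" using gpos by (simp add: s_def)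
    define x' where "x' = (\<lambda>i. x i / s)"
    have "g x' = g x / s^2" by (simp add: g_def x'_def power_divide sum_divide_distrib)
    then have "g x' = 1" using s2 gpos by simp
    then have "f x' \<le> lam" by (rule maxy)
    moreover have "f x' = f x / s^2"
      by (simp add: f_def x'_def sum_divide_distrib power2_eq_square)
    ultimately have "f x / s^2 \<le> lam" by simp
    then show ?thesis using s2 gpos by (simp add: divide_le_eq mult.commute)
  qed
  have eig: "(\<Sum>j<n. m k j * y j) = lam * y k" if k: "k < n" for k
  proof -
    define S where "S = (\<Sum>j<n. m k j * y j)"
    define b where "b = lam * y k - S"
    define a where "a = lam - m k k"
    have quad: "0 \<le> 2 * t * b + t^2 * a" for t
    proof -
      define d where "d = (\<lambda>i. if i = k then t else (0::real))"
      define z where "z = (\<lambda>i. y i + d i)"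
      have gz: "g z = g y + 2 * t * y k + t^2"
      proof -
        have "g z = (\<Sum>i<n. (y i)^2 + 2 * (y i * d i) + d i * d i)"
          unfolding g_def z_def by (intro sum.cong) (auto simp: power2_eq_square algebra_simps)
        also have "\<dots> = g y + 2 * (\<Sum>i<n. y i * d i) + (\<Sum>i<n. d i * d i)"
          by (simp add: g_def sum.distrib sum_distrib_left)
        also have "(\<Sum>i<n. y i * d i) = y k * t" unfolding d_def by (rule sum_delta_r[OF k])
        also have "(\<Sum>i<n. d i * d i) = t * t"
          using sum_delta_r[OF k, of d t] by (simp add: d_def)
        finally show ?thesis by (simp add: power2_eq_square)
      qed
      have fz: "f z = f y + 2 * t * S + t^2 * m k k"
      proof -
        have "f z = (\<Sum>i<n. \<Sum>j<n. m i j * y i * y j + m i j * y i * d j + m i j * d i * y j + m i j * d i * d j)"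
          unfolding f_def z_def by (intro sum.cong refl) (simp add: algebra_simps)
        also have "\<dots> = f y + (\<Sum>i<n. \<Sum>j<n. m i j * y i * d j) + (\<Sum>i<n. \<Sum>j<n. m i j * d i * y j)
             + (\<Sum>i<n. \<Sum>j<n. m i j * d i * d j)"
          by (simp add: f_def sum.distrib)
        also have "(\<Sum>i<n. \<Sum>j<n. m i j * y i * d j) = t * S"
        proof -
          have "(\<Sum>i<n. \<Sum>j<n. m i j * y i * d j) = (\<Sum>i<n. m i k * y i * t)"
            unfolding d_def by (intro sum.cong refl sum_delta_r[OF k])
          also have "\<dots> = (\<Sum>i<n. t * (m k i * y i))"
            by (intro sum.cong refl) (simp add: msym[OF _ k] mult_ac)
          finally show ?thesis by (simp add: S_def sum_distrib_left)
        qed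
        also have "(\<Sum>i<n. \<Sum>j<n. m i j * d i * y j) = t * S"
        proof -
          have "(\<Sum>i<n. \<Sum>j<n. m i j * d i * y j) = (\<Sum>i<n. d i * (\<Sum>j<n. m i j * y j))"
            by (simp add: sum_distrib_left mult_ac)
          also have "\<dots> = (\<Sum>i<n. (\<Sum>j<n. m i j * y j) * d i)" by (simp add: mult.commute)
          also have "\<dots> = (\<Sum>j<n. m k j * y j) * t" unfolding d_def by (rule sum_delta_r[OF k])
          finally show ?thesis by (simp add: S_def mult.commute)
        qed
        also have "(\<Sum>i<n. \<Sum>j<n. m i j * d i * d j) = t^2 * m k k"
        proof -
          have "(\<Sum>i<n. \<Sum>j<n. m i j * d i * d j) = (\<Sum>i<n. m i k * d i * t)"
            unfolding d_def by (intro sum.cong refl sum_delta_r[OF k])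
          also have "\<dots> = (\<Sum>i<n. (m i k * t) * d i)" by (simp add: mult_ac)
          also have "\<dots> = m k k * t * t" unfolding d_def by (rule sum_delta_r[OF k])
          finally show ?thesis by (simp add: power2_eq_square mult_ac)
        qed
        finally show ?thesis by simp
      qed
      have "f z \<le> lam * g z" by (rule ray)
      then have "f y + 2 * t * S + t^2 * m k k \<le> lam * (1 + 2 * t * y k + t^2)"
        using fz gz gy by simp
      then show ?thesis unfolding a_def b_def lam_def by (simp add: algebra_simps)
    qed
    have "b = 0"
    proof (rule ccontr)
      assume b0: "b \<noteq> 0"
      define t where "t = - b / (\<bar>a\<bar> + 1)"
      have ap: "\<bar>a\<bar> + 1 > 0" by simp
      have "t^2 * a \<le> t^2 * \<bar>a\<bar>" by (intro mult_left_mono) auto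
      also have "t^2 * \<bar>a\<bar> = b^2 * \<bar>a\<bar> / (\<bar>a\<bar> + 1)^2" by (simp add: t_def power_divide)
      also have "\<dots> = (b^2 / (\<bar>a\<bar> + 1)) * (\<bar>a\<bar> / (\<bar>a\<bar> + 1))"
        by (simp add: power2_eq_square)
      also have "\<dots> \<le> (b^2 / (\<bar>a\<bar> + 1)) * 1"
        by (intro mult_left_mono) (use ap in auto)
      also have "\<dots> = b^2 / (\<bar>a\<bar> + 1)" by simp
      finally have le1: "2 * t * b + t^2 * a \<le> 2 * t * b + b^2 / (\<bar>a\<bar> + 1)" by simp
      have e: "2 * t * b = - 2 * (b^2 / (\<bar>a\<bar> + 1))" by (simp add: t_def power2_eq_square)
      have "2 * t * b + t^2 * a \<le> - (b^2 / (\<bar>a\<bar> + 1))" using le1 e by linarith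
      moreover have "b^2 / (\<bar>a\<bar> + 1) > 0" using b0 ap by simp
      ultimately show False using quad[of t] by linarith
    qed
    then show ?thesis by (simp add: b_def S_def)
  qed
  have ypos: "y i > 0" if i: "i < n" for i
  proof (rule ccontr)
    assume "\<not> y i > 0"
    then have yi: "y i = 0" using y0[of i] by simp
    have zero_all: "y j = 0" if j: "j < n" for j
    proof (rule irr_prop[OF A irr, of "\<lambda>a. y a = 0", OF _ i j yi])
      fix a b assume a: "a < n" and b: "b < n" and ab: "A $$ (a,b) \<noteq> 0" and ya: "y a = 0"
      have "(\<Sum>j<n. m a j * y j) = 0" using eig[OF a] ya by simp
      then have "\<forall>j\<in>{..<n}. m a j * y j = 0"
        using mnn[OF a] y0 by (subst (asm) sum_nonneg_eq_0_iff) (auto intro: mult_nonneg_nonneg)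
      then have "m a b * y b = 0" using b by auto
      moreover have "m a b > 0" using mA[OF a b] Aij0[OF a b] ab by simp
      ultimately show "y b = 0" by simp
    qed
    have "g y = 0" unfolding g_def using zero_all by simp
    then show False using gy by simp
  qed
  define v where "v = Matrix.vec n y"
  have v: "v \<in> carrier_vec n" by (simp add: v_def)
  have Mv: "M *\<^sub>v v = lam \<cdot>\<^sub>v v"
  proof (rule eq_vecI)
    show "dim_vec (M *\<^sub>v v) = dim_vec (lam \<cdot>\<^sub>v v)" using M v by simp
    fix i assume "i < dim_vec (lam \<cdot>\<^sub>v v)"
    then have i: "i < n" using v by simp
    have "(M *\<^sub>v v) $ i = (\<Sum>j<n. m i j * y j)"
      using mv_nth[OF M v i] by (simp add: m_def v_def)
    then show "(M *\<^sub>v v) $ i = (lam \<cdot>\<^sub>v v) $ i" using eig[OF i] i by (simp add: v_def)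
  qed
  have vpos: "\<And>i. i < n \<Longrightarrow> v $ i > 0" using ypos by (simp add: v_def)
  have "real_spectral_radius M = lam" by (rule L2[OF M Mnn v vpos Mv n])
  then have "perron_vector M v" unfolding perron_vector_def using M v vpos Mv by simp
  then show ?thesis unfolding M_def by blast
qed

lemma mv_comb:
  fixes A :: "real mat"
  assumes A: "A \<in> carrier_mat n n" and v: "v \<in> carrier_vec n" and i: "i < n"
  shows "((\<alpha> \<cdot>\<^sub>m A + \<beta> \<cdot>\<^sub>m A\<^sup>T) *\<^sub>v v) $ i
      = \<alpha> * (\<Sum>j<n. A $$ (i,j) * v $ j) + \<beta> * (\<Sum>j<n. A $$ (j,i) * v $ j)"
    and "((A + A\<^sup>T) *\<^sub>v v) $ i = (\<Sum>j<n. A $$ (i,j) * v $ j) + (\<Sum>j<n. A $$ (j,i) * v $ j)"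
    and "((A - A\<^sup>T) *\<^sub>v v) $ i = (\<Sum>j<n. A $$ (i,j) * v $ j) - (\<Sum>j<n. A $$ (j,i) * v $ j)"
proof -
  have C1: "\<alpha> \<cdot>\<^sub>m A + \<beta> \<cdot>\<^sub>m A\<^sup>T \<in> carrier_mat n n" using A by simp
  have C2: "A + A\<^sup>T \<in> carrier_mat n n" using A by simp
  have C3: "A - A\<^sup>T \<in> carrier_mat n n" by (rule minus_carrier_mat) (use A in simp)
  show "((\<alpha> \<cdot>\<^sub>m A + \<beta> \<cdot>\<^sub>m A\<^sup>T) *\<^sub>v v) $ i
      = \<alpha> * (\<Sum>j<n. A $$ (i,j) * v $ j) + \<beta> * (\<Sum>j<n. A $$ (j,i) * v $ j)"
    using mv_nth[OF C1 v i] A i by (simp add: sum.distrib sum_distrib_left algebra_simps)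
  show "((A + A\<^sup>T) *\<^sub>v v) $ i = (\<Sum>j<n. A $$ (i,j) * v $ j) + (\<Sum>j<n. A $$ (j,i) * v $ j)"
    using mv_nth[OF C2 v i] A i by (simp add: sum.distrib algebra_simps)
  show "((A - A\<^sup>T) *\<^sub>v v) $ i = (\<Sum>j<n. A $$ (i,j) * v $ j) - (\<Sum>j<n. A $$ (j,i) * v $ j)"
    using mv_nth[OF C3 v i] A i by (simp add: sum_subtractf algebra_simps)
qed

lemma comb_nonneg:
  fixes A :: "real mat"
  assumes A: "A \<in> carrier_mat n n" and nn: "nonneg_mat A" and t: "t \<in> {0..1}"
  shows "nonneg_mat ((1 - t) \<cdot>\<^sub>m A + t \<cdot>\<^sub>m A\<^sup>T)"
  using A nn t unfolding nonneg_mat_def by (auto intro!: add_nonneg_nonneg mult_nonneg_nonneg)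

theorem theorem6:
  fixes A :: "real mat" and n :: nat
  assumes "A \<in> carrier_mat n n"
    and "nonneg_mat A"
    and "irreducible_mat A"
  shows "(\<forall>s \<in> {0..1}. \<forall>t \<in> {0..1}.
            real_spectral_radius ((1 - s) \<cdot>\<^sub>m A + s \<cdot>\<^sub>m A\<^sup>T)
          = real_spectral_radius ((1 - t) \<cdot>\<^sub>m A + t \<cdot>\<^sub>m A\<^sup>T))
     \<longleftrightarrow> (\<forall>v. perron_vector (A + A\<^sup>T) v \<longrightarrow> (A - A\<^sup>T) *\<^sub>v v = 0\<^sub>v n)"
proof -
  note A = assms(1) and nn = assms(2) and irr = assms(3)
  have n: "n > 0" using irr A unfolding irreducible_mat_def by auto
  have Ct: "(1 - t) \<cdot>\<^sub>m A + t \<cdot>\<^sub>m A\<^sup>T \<in> carrier_mat n n" for t using A by simp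
  define p where "p = (\<lambda>v i. \<Sum>j<n. A $$ (i,j) * v $ j)"
  define q where "q = (\<lambda>v i. \<Sum>j<n. A $$ (j,i) * v $ j)"
  have pv_props: "v \<in> carrier_vec n \<and> (\<forall>i<n. v $ i > 0) \<and>
      (\<forall>i<n. p v i + q v i = real_spectral_radius (A + A\<^sup>T) * v $ i)"
    if pv: "perron_vector (A + A\<^sup>T) v" for v
  proof -
    have v: "v \<in> carrier_vec n" using pv A unfolding perron_vector_def by simp
    moreover have "\<forall>i<n. v $ i > 0" using pv v unfolding perron_vector_def by simp
    moreover have "\<forall>i<n. p v i + q v i = real_spectral_radius (A + A\<^sup>T) * v $ i"
    proof (intro allI impI)
      fix i assume i: "i < n"
      have "((A + A\<^sup>T) *\<^sub>v v) $ i = (real_spectral_radius (A + A\<^sup>T) \<cdot>\<^sub>v v) $ i"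
        using pv unfolding perron_vector_def by simp
      then show "p v i + q v i = real_spectral_radius (A + A\<^sup>T) * v $ i"
        using mv_comb(2)[OF A v i] v i by (simp add: p_def q_def)
    qed
    ultimately show ?thesis by blast
  qed
  show ?thesis
  proof
    assume const: "\<forall>s \<in> {0..1}. \<forall>t \<in> {0..1}.
            real_spectral_radius ((1 - s) \<cdot>\<^sub>m A + s \<cdot>\<^sub>m A\<^sup>T)
          = real_spectral_radius ((1 - t) \<cdot>\<^sub>m A + t \<cdot>\<^sub>m A\<^sup>T)"
    show "\<forall>v. perron_vector (A + A\<^sup>T) v \<longrightarrow> (A - A\<^sup>T) *\<^sub>v v = 0\<^sub>v n"
    proof (intro allI impI)
      fix v assume pv: "perron_vector (A + A\<^sup>T) v"
      from pv_props[OF pv] have v: "v \<in> carrier_vec n" and pos: "\<And>i. i < n \<Longrightarrow> v $ i > 0"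
        and pq: "\<And>i. i < n \<Longrightarrow> p v i + q v i = real_spectral_radius (A + A\<^sup>T) * v $ i" by auto
      define c where "c = real_spectral_radius (A + A\<^sup>T) / 2"
      define S where "S = (1 - 1/2) \<cdot>\<^sub>m A + (1/2) \<cdot>\<^sub>m A\<^sup>T"
      have S: "S \<in> carrier_mat n n" using A by (simp add: S_def)
      have Snn: "nonneg_mat S" unfolding S_def by (rule comb_nonneg[OF A nn]) auto
      have Sv: "S *\<^sub>v v = c \<cdot>\<^sub>v v"
      proof (rule eq_vecI)
        show "dim_vec (S *\<^sub>v v) = dim_vec (c \<cdot>\<^sub>v v)" using S v by simp
        fix i assume "i < dim_vec (c \<cdot>\<^sub>v v)"
        then have i: "i < n" using v by simp
        show "(S *\<^sub>v v) $ i = (c \<cdot>\<^sub>v v) $ i"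
          using mv_comb(1)[OF A v i, of "1 - 1/2" "1/2"] pq[OF i] v i
          by (simp add: S_def c_def p_def q_def field_simps)
      qed
      have rS: "real_spectral_radius S = c" by (rule L2[OF S Snn v pos Sv n])
      have A0: "(1 - 0) \<cdot>\<^sub>m A + 0 \<cdot>\<^sub>m A\<^sup>T = A" by (rule eq_matI) (use A in auto)
      have "real_spectral_radius A = c"
        using const[rule_format, of 0 "1/2"] A0 rS by (simp add: S_def)
      then have "spectral_radius (map_mat complex_of_real A) = c" by (simp add: real_spectral_radius_def)
      moreover have "spectral_radius (map_mat complex_of_real A) \<in> cmod ` spectrum (map_mat complex_of_real A)"
        by (rule spectral_radius_mem_max(1)[OF _ n]) (use A in simp)
      ultimately obtain \<mu> where mu: "\<mu> \<in> spectrum (map_mat complex_of_real A)" and cm: "cmod \<mu> = c"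
        by auto
      have ev2: "(A + A\<^sup>T) *\<^sub>v v = (2 * c) \<cdot>\<^sub>v v"
        using pv unfolding perron_vector_def c_def by simp
      have Av: "A *\<^sub>v v = c \<cdot>\<^sub>v v" by (rule L3[OF A nn irr v pos ev2 mu cm])
      show "(A - A\<^sup>T) *\<^sub>v v = 0\<^sub>v n"
      proof (rule eq_vecI)
        show "dim_vec ((A - A\<^sup>T) *\<^sub>v v) = dim_vec (0\<^sub>v n)" using A by simp
        fix i assume "i < dim_vec (0\<^sub>v n)"
        then have i: "i < n" by simp
        have "(A *\<^sub>v v) $ i = (c \<cdot>\<^sub>v v) $ i" using Av by simp
        then have "p v i = c * v $ i" using mv_nth[OF A v i] v i by (simp add: p_def)
        then show "((A - A\<^sup>T) *\<^sub>v v) $ i = 0\<^sub>v n $ i"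
          using mv_comb(3)[OF A v i] pq[OF i] i by (simp add: p_def q_def c_def)
      qed
    qed
  next
    assume H: "\<forall>v. perron_vector (A + A\<^sup>T) v \<longrightarrow> (A - A\<^sup>T) *\<^sub>v v = 0\<^sub>v n"
    obtain v where pv: "perron_vector (A + A\<^sup>T) v" using perron_exists[OF A nn irr] by blast
    from pv_props[OF pv] have v: "v \<in> carrier_vec n" and pos: "\<And>i. i < n \<Longrightarrow> v $ i > 0"
      and pq: "\<And>i. i < n \<Longrightarrow> p v i + q v i = real_spectral_radius (A + A\<^sup>T) * v $ i" by auto
    have pqe: "p v i = q v i" if i: "i < n" for i
    proof -
      have "((A - A\<^sup>T) *\<^sub>v v) $ i = 0\<^sub>v n $ i" using H pv by simp
      then show ?thesis using mv_comb(3)[OF A v i] i by (simp add: p_def q_def)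
    qed
    define c where "c = real_spectral_radius (A + A\<^sup>T) / 2"
    have rt: "real_spectral_radius ((1 - t) \<cdot>\<^sub>m A + t \<cdot>\<^sub>m A\<^sup>T) = c" if t: "t \<in> {0..1}" for t
    proof (rule L2[OF Ct comb_nonneg[OF A nn t] v pos _ n])
      show "((1 - t) \<cdot>\<^sub>m A + t \<cdot>\<^sub>m A\<^sup>T) *\<^sub>v v = c \<cdot>\<^sub>v v"
      proof (rule eq_vecI)
        show "dim_vec (((1 - t) \<cdot>\<^sub>m A + t \<cdot>\<^sub>m A\<^sup>T) *\<^sub>v v) = dim_vec (c \<cdot>\<^sub>v v)" using A v by simp
        fix i assume "i < dim_vec (c \<cdot>\<^sub>v v)"
        then have i: "i < n" using v by simp
        have "p v i = c * v $ i" using pq[OF i] pqe[OF i] by (simp add: c_def)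
        moreover have "q v i = c * v $ i" using pq[OF i] pqe[OF i] by (simp add: c_def)
        ultimately show "(((1 - t) \<cdot>\<^sub>m A + t \<cdot>\<^sub>m A\<^sup>T) *\<^sub>v v) $ i = (c \<cdot>\<^sub>v v) $ i"
          using mv_comb(1)[OF A v i, of "1 - t" t] v i by (simp add: p_def q_def algebra_simps)
      qed
    qed
    show "\<forall>s \<in> {0..1}. \<forall>t \<in> {0..1}.
            real_spectral_radius ((1 - s) \<cdot>\<^sub>m A + s \<cdot>\<^sub>m A\<^sup>T)
          = real_spectral_radius ((1 - t) \<cdot>\<^sub>m A + t \<cdot>\<^sub>m A\<^sup>T)"
      using rt by simp
  qed
qed
end
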